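(* Let $k$ be a perfect field of characteristic $p>2$, $N\ge2$ with $p\nmid N+1$, let $\eta\in W_2(k)$ and $\lambda=\eta\bmod p\in k$. If $\mathbb{HD}^{p-1}_{N+1}(\lambda)\ne0$, then $\mathbb{HD}^{2p-1}_{N+1}(\eta)$ is invertible in $W_2(k)$, so the fraction $\mathbb{HD}^{p-1}_{N+1}(\eta)/\mathbb{HD}^{2p-1}_{N+1}(\eta)\in W_2(k)$ is well defined, and it depends only on $\lambda$.
   Context: $\mathbb{HD}^P_M(X)=\sum_{i=0}^{[P/M]}c_i(-M)^{P-iM}X^{iM}\in\mathbb{Z}[X]$ with $c_i=\binom{P}{i}\binom{P-i}{i}\cdots\binom{P-(M-1)i}{i}$ (the Hasse--Dwork polynomial), evaluated in $k$ or $W_2(k)$. *)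

theory Defs
  imports Main
begin

definition hd_c :: "nat \<Rightarrow> nat \<Rightarrow> nat \<Rightarrow> int" where
  "hd_c P M i = (\<Prod>j<M. int ((P - j * i) choose i))"

definition hd_coeff :: "nat \<Rightarrow> nat \<Rightarrow> nat \<Rightarrow> int" where
  "hd_coeff P M i = hd_c P M i * (- int M) ^ (P - i * M)"

definition HD :: "nat \<Rightarrow> nat \<Rightarrow> 'a::comm_ring_1 \<Rightarrow> 'a" where
  "HD P M x = (\<Sum>i\<le>P div M. of_int (hd_coeff P M i) * x ^ (i * M))"

text \<open>Witt vectors of length 2 over a ring of characteristic p = CHAR('a):
  pairs (a0,a1), with the Witt vector ring laws (ghost components a0, a0^p + p a1).\<close>
type_synonym 'a w2 = "'a \<times> 'a"

definition w2_zero :: "'a::comm_ring_1 w2" where "w2_zero = (0, 0)"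
definition w2_one :: "'a::comm_ring_1 w2" where "w2_one = (1, 0)"

definition w2_add :: "'a::comm_ring_1 w2 \<Rightarrow> 'a w2 \<Rightarrow> 'a w2" where
  "w2_add a b = (let p = CHAR('a) in
     (fst a + fst b,
      snd a + snd b - (\<Sum>i\<in>{1..<p}. of_nat ((p choose i) div p) * fst a ^ i * fst b ^ (p - i))))"

definition w2_mul :: "'a::comm_ring_1 w2 \<Rightarrow> 'a w2 \<Rightarrow> 'a w2" where
  "w2_mul a b = (let p = CHAR('a) in
     (fst a * fst b, fst a ^ p * snd b + fst b ^ p * snd a))"

text \<open>Image of an integer n in W_2: the Witt vector with ghost components (n, n).\<close>
definition w2_of_int :: "int \<Rightarrow> 'a::comm_ring_1 w2" where
  "w2_of_int n = (let p = CHAR('a) in (of_int n, of_int ((n - n ^ p) div int p)))"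

primrec w2_pow :: "'a::comm_ring_1 w2 \<Rightarrow> nat \<Rightarrow> 'a w2" where
  "w2_pow x 0 = w2_one"
| "w2_pow x (Suc n) = w2_mul x (w2_pow x n)"

definition HD_W2 :: "nat \<Rightarrow> nat \<Rightarrow> 'a::comm_ring_1 w2 \<Rightarrow> 'a w2" where
  "HD_W2 P M x = foldr (\<lambda>i acc. w2_add (w2_mul (w2_of_int (hd_coeff P M i)) (w2_pow x (i * M))) acc)
                       [0..<Suc (P div M)] w2_zero"

definition w2_unit :: "'a::comm_ring_1 w2 \<Rightarrow> bool" where
  "w2_unit x \<longleftrightarrow> (\<exists>y. w2_mul x y = w2_one)"

definition w2_div :: "'a::comm_ring_1 w2 \<Rightarrow> 'a w2 \<Rightarrow> 'a w2" where
  "w2_div x y = w2_mul x (SOME z. w2_mul y z = w2_one)"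

end

theory Submission imports Defs "HOL-Computational_Algebra.Primes" begin

lemma choose_shift_p:
  fixes a i p :: nat
  assumes "CHAR('a::comm_ring_1) = p" "prime p" "i < p"
  shows "(of_nat ((p + a) choose i) :: 'a) = of_nat (a choose i)"
proof -
  have "(p + a) choose i = (\<Sum>k\<le>i. (p choose k) * (a choose (i - k)))"
    by (simp add: vandermonde)
  also have "\<dots> = (\<Sum>k\<in>{0}. (p choose k) * (a choose (i - k))) + (\<Sum>k\<in>{1..i}. (p choose k) * (a choose (i - k)))"
  proof -
    have "{..i} = insert 0 {1..i}" by auto
    thus ?thesis by simp
  qed
  finally have e: "(p + a) choose i = (a choose i) + (\<Sum>k\<in>{1..i}. (p choose k) * (a choose (i - k)))" by simp
  have "p dvd (\<Sum>k\<in>{1..i}. (p choose k) * (a choose (i - k)))"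
    apply (rule dvd_sum) apply (rule dvd_mult2) apply (rule dvd_choose_prime)
    using assms by (auto simp: prime_gt_0_nat)
  hence "(of_nat (\<Sum>k\<in>{1..i}. (p choose k) * (a choose (i - k))) :: 'a) = 0"
    using assms(1) of_nat_eq_0_iff_char_dvd by blast
  thus ?thesis by (subst e) (simp only: of_nat_add, simp)
qed

lemma hd_c_rel:
  fixes p M i :: nat
  assumes "CHAR('a::comm_ring_1) = p" "prime p" "M \<ge> 2" "i * M \<le> 2 * p - 1"
  shows "(of_int (hd_c (2*p-1) M i) :: 'a) = (if i * M \<le> p - 1 then of_int (hd_c (p-1) M i) else 0)"
proof -
  have p2: "p \<ge> 2" using assms prime_ge_2_nat by blast
  have ip: "i < p"
  proof -
    have "i * 2 \<le> i * M" using assms by simp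
    thus ?thesis using assms p2 by linarith
  qed
  show ?thesis
  proof (cases "i * M \<le> p - 1")
    case True
    have "(of_int (hd_c (2*p-1) M i) :: 'a) = (\<Prod>j<M. of_nat ((2*p-1 - j*i) choose i))"
      by (simp add: hd_c_def)
    also have "\<dots> = (\<Prod>j<M. of_nat ((p-1 - j*i) choose i))"
    proof (rule prod.cong[OF refl])
      fix j assume "j \<in> {..<M}"
      hence "j * i \<le> i * M" by simp
      hence "2*p-1 - j*i = p + (p-1-j*i)" using True p2 by linarith
      thus "(of_nat ((2*p-1 - j*i) choose i) :: 'a) = of_nat ((p-1 - j*i) choose i)"
        using choose_shift_p[OF assms(1,2) ip] by simp
    qed
    also have "\<dots> = of_int (hd_c (p-1) M i)" by (simp add: hd_c_def)
    finally show ?thesis using True by simp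
  next
    case False
    hence i0: "i > 0" by (cases i) auto
    define j0 where "j0 = (p-1) div i"
    have "j0 * i \<le> p - 1" unfolding j0_def by (metis div_mult_mod_eq le_add1)
    have "p - 1 < (j0 + 1) * i" unfolding j0_def using i0
      by (metis add.commute div_mult_mod_eq mod_less_divisor mult.commute add_less_cancel_left distrib_left mult.right_neutral)
    have j0M: "j0 < M"
    proof (rule ccontr)
      assume "\<not> j0 < M"
      hence "M * i \<le> j0 * i" by (simp add: mult_le_mono1)
      thus False using False \<open>j0 * i \<le> p - 1\<close> by (metis le_trans mult.commute)
    qed
    have eq: "2*p-1 - j0*i = p + (p-1-j0*i)" using \<open>j0 * i \<le> p - 1\<close> p2 by linarith
    have lt: "p-1-j0*i < i" using \<open>p - 1 < (j0 + 1) * i\<close> \<open>j0 * i \<le> p - 1\<close> by simp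
    have z: "(p-1-j0*i) choose i = 0" using lt by (rule binomial_eq_0)
    have "(of_nat ((2*p-1 - j0*i) choose i) :: 'a) = of_nat ((p-1-j0*i) choose i)"
      unfolding eq by (rule choose_shift_p[OF assms(1,2) ip])
    hence "(of_nat ((2*p-1 - j0*i) choose i) :: 'a) = 0" by (simp only: z of_nat_0)
    have "(\<Prod>j<M. (of_nat ((2*p-1 - j*i) choose i) :: 'a)) = 0"
      by (rule prod_zero) (use j0M \<open>(of_nat ((2*p-1 - j0*i) choose i) :: 'a) = 0\<close> in auto)
    thus ?thesis using False by (simp add: hd_c_def)
  qed
qed

lemma w2_mul_eq: "w2_mul a b = (fst a * fst b, fst a ^ CHAR('a) * snd b + fst b ^ CHAR('a) * snd (a::'a::comm_ring_1 w2))"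
  by (simp add: w2_mul_def Let_def)

lemma w2_add_fst: "fst (w2_add a b) = fst a + fst (b::'a::comm_ring_1 w2)"
  by (simp add: w2_add_def Let_def)

lemma w2_add_snd_diff:
  assumes "fst a = fst a'" "fst b = fst (b'::'a::comm_ring_1 w2)"
  shows "snd (w2_add a b) - snd (w2_add a' b') = (snd a - snd a') + (snd b - snd b')"
  using assms by (simp add: w2_add_def Let_def algebra_simps)

lemma w2_of_int_fst: "fst (w2_of_int n :: 'a::comm_ring_1 w2) = of_int n"
  by (simp add: w2_of_int_def Let_def)

lemma w2_pow_eq: "w2_pow (l, e) n = (l ^ n, of_nat n * l ^ ((n - 1) * CHAR('a)) * (e::'a::comm_ring_1))"
proof (induction n)
  case 0
  then show ?case by (simp add: w2_one_def)
next
  case (Suc n)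
  show ?case
  proof (cases n)
    case 0
    then show ?thesis by (simp add: w2_one_def w2_mul_eq)
  next
    case (Suc m)
    have "l ^ CHAR('a) * (of_nat n * l ^ ((n - 1) * CHAR('a)) * e) + (l ^ n) ^ CHAR('a) * e
          = of_nat (Suc n) * l ^ (n * CHAR('a)) * e"
      using Suc by (simp add: power_mult[symmetric] power_add[symmetric] algebra_simps mult.commute)
    then show ?thesis using Suc.IH by (simp add: w2_mul_eq)
  qed
qed

lemma fold_fst:
  fixes g :: "nat \<Rightarrow> int" and k :: "nat \<Rightarrow> nat" and l e :: "'a::comm_ring_1"
  shows "fst (foldr (\<lambda>i acc. w2_add (w2_mul (w2_of_int (g i)) (w2_pow (l, e) (k i))) acc) xs w2_zero)
       = (\<Sum>i\<leftarrow>xs. of_int (g i) * l ^ k i)"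
  by (induction xs) (simp_all add: w2_zero_def w2_add_fst w2_mul_eq w2_of_int_fst w2_pow_eq)

lemma fold_lemma:
  fixes g :: "nat \<Rightarrow> int" and k :: "nat \<Rightarrow> nat" and l e :: "'a::comm_ring_1"
  defines "T \<equiv> \<lambda>e xs. foldr (\<lambda>i acc. w2_add (w2_mul (w2_of_int (g i)) (w2_pow (l, e) (k i))) acc) xs w2_zero"
  shows "snd (T e xs) - snd (T 0 xs) = (\<Sum>i\<leftarrow>xs. of_int (g i) ^ CHAR('a) * of_nat (k i) * l ^ ((k i - 1) * CHAR('a))) * e"
proof (induction xs)
  case Nil
  then show ?case by (simp add: T_def w2_zero_def)
next
  case (Cons a xs)
  have "snd (T e (a # xs)) - snd (T 0 (a # xs)) =
     (snd (w2_mul (w2_of_int (g a)) (w2_pow (l, e) (k a))) - snd (w2_mul (w2_of_int (g a)) (w2_pow (l, 0) (k a))))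
     + (snd (T e xs) - snd (T 0 xs))"
    unfolding T_def foldr.simps o_def
    by (rule w2_add_snd_diff) (simp add: w2_mul_eq w2_pow_eq, simp only: fold_fst)
  also have "\<dots> = of_int (g a) ^ CHAR('a) * of_nat (k a) * l ^ ((k a - 1) * CHAR('a)) * e + (snd (T e xs) - snd (T 0 xs))"
    by (simp add: w2_mul_eq w2_pow_eq w2_of_int_fst algebra_simps)
  finally show ?case using Cons.IH by (simp add: algebra_simps)
qed

definition Hd :: "nat \<Rightarrow> nat \<Rightarrow> 'a::comm_ring_1 \<Rightarrow> 'a" where
  "Hd P M l = (\<Sum>i\<le>P div M. of_int (hd_coeff P M i) ^ CHAR('a) * of_nat (i * M) * l ^ ((i * M - 1) * CHAR('a)))"

lemma list_sum_conv: "(\<Sum>i\<leftarrow>[0..<Suc n]. f i) = (\<Sum>i\<le>n. f i)"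
proof -
  have "(\<Sum>i\<leftarrow>[0..<Suc n]. f i) = sum f (set [0..<Suc n])"
    by (rule sum_list_distinct_conv_sum_set) simp
  also have "set [0..<Suc n] = {..n}" by auto
  finally show ?thesis .
qed

lemma HD_W2_eq:
  "HD_W2 P M (l, e) = (HD P M l, snd (HD_W2 P M (l, 0)) + Hd P M l * (e::'a::comm_ring_1))"
proof -
  note F = fold_lemma[where g="hd_coeff P M" and k="\<lambda>i. i * M" and l=l and e=e and xs="[0..<Suc (P div M)]"]
  have "fst (HD_W2 P M (l, e)) = HD P M l"
    using fold_fst[where g="hd_coeff P M" and k="\<lambda>i. i * M" and l=l and e=e and xs="[0..<Suc (P div M)]"] by (simp del: upt_Suc add: HD_W2_def HD_def list_sum_conv)
  moreover have "snd (HD_W2 P M (l, e)) = snd (HD_W2 P M (l, 0)) + Hd P M l * e"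
    using F by (simp del: upt_Suc add: HD_W2_def Hd_def list_sum_conv algebra_simps)
  ultimately show ?thesis by (metis prod.collapse)
qed


lemma sum_rel:
  fixes f g :: "nat \<Rightarrow> 'a::comm_ring_1"
  assumes "a \<le> b" "\<And>i. i \<le> b \<Longrightarrow> f i = (if i \<le> a then c * g i else 0)"
  shows "(\<Sum>i\<le>b. f i) = c * (\<Sum>i\<le>a. g i)"
proof -
  have "(\<Sum>i\<le>b. f i) = (\<Sum>i\<in>{..b}. if i \<le> a then c * g i else 0)"
    using assms(2) by (intro sum.cong) auto
  also have "\<dots> = (\<Sum>i\<in>{i\<in>{..b}. i \<le> a}. c * g i)"
    by (rule sum.inter_filter[symmetric]) simp
  also have "{i\<in>{..b}. i \<le> a} = {..a}" using assms(1) by auto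
  finally show ?thesis by (simp add: sum_distrib_left)
qed

lemma coeff_rel:
  fixes p M i :: nat
  assumes "CHAR('a::comm_ring_1) = p" "prime p" "M \<ge> 2" "i \<le> (2 * p - 1) div M"
  shows "(of_int (hd_coeff (2*p-1) M i) :: 'a) =
     (if i \<le> (p - 1) div M then (- of_nat M) ^ p * of_int (hd_coeff (p-1) M i) else 0)"
proof -
  have M0: "M > 0" using assms by simp
  have iM: "i * M \<le> 2 * p - 1" using assms(4) M0 by (simp add: less_eq_div_iff_mult_less_eq)
  have ieq: "i \<le> (p - 1) div M \<longleftrightarrow> i * M \<le> p - 1" using M0 by (simp add: less_eq_div_iff_mult_less_eq)
  note R = hd_c_rel[OF assms(1-3) iM]
  show ?thesis
  proof (cases "i * M \<le> p - 1")
    case True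
    have p1: "p \<ge> 1" using assms(2) prime_ge_1_nat by blast
    have e: "2 * p - 1 - i * M = p + (p - 1 - i * M)" using True p1 by linarith
    have e2: "(- (of_nat M :: 'a)) ^ (2 * p - 1 - i * M) = (- of_nat M) ^ p * (- of_nat M) ^ (p - 1 - i * M)"
      by (simp only: e power_add)
    show ?thesis using True R ieq
      by (simp only: hd_coeff_def of_int_mult of_int_power of_int_minus of_int_of_nat_eq e2 if_True) simp
  next
    case False
    then show ?thesis using R ieq by (simp add: hd_coeff_def)
  qed
qed

lemma w2_unit_I:
  fixes x :: "'a::field w2"
  assumes "fst x \<noteq> 0"
  shows "w2_unit x"
  unfolding w2_unit_def
proof
  show "w2_mul x (1 / fst x, - snd x / fst x ^ (2 * CHAR('a))) = w2_one"
    using assms by (simp add: w2_mul_eq w2_one_def field_simps power_mult_distrib power_mult power2_eq_square)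
qed

lemma w2_div_eq:
  fixes x y :: "'a::field w2"
  assumes "fst y \<noteq> 0"
  shows "w2_div x y = (fst x / fst y, snd x / fst y ^ CHAR('a) - fst x ^ CHAR('a) * snd y / fst y ^ (2 * CHAR('a)))"
proof -
  define z where "z = (1 / fst y, - snd y / fst y ^ (2 * CHAR('a)))"
  have zi: "w2_mul y z = w2_one"
    using assms by (simp add: z_def w2_mul_eq w2_one_def field_simps power_mult_distrib power_mult power2_eq_square)
  have uq: "z' = z" if "w2_mul y z' = w2_one" for z'
  proof -
    have a: "fst y * fst z' = 1" "fst y ^ CHAR('a) * snd z' + fst z' ^ CHAR('a) * snd y = 0"
      using that by (simp_all add: w2_mul_eq w2_one_def)
    have f: "fst z' = 1 / fst y" using a(1) assms by (simp add: field_simps)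
    have "snd z' = - snd y / fst y ^ (2 * CHAR('a))"
      using a(2) assms unfolding f by (simp add: field_simps power_mult_distrib power_mult power2_eq_square) (metis add.commute add_eq_0_iff2)
    thus ?thesis using f by (simp add: z_def prod_eq_iff)
  qed
  have "(SOME z. w2_mul y z = w2_one) = z"
    using zi uq by (rule some_equality)
  thus ?thesis using assms
    by (simp add: w2_div_def w2_mul_eq z_def field_simps power_mult_distrib power_mult power2_eq_square)
qed


lemma indep:
  fixes A B c a1 b1 hN hD e :: "'a::field"
  assumes "B \<noteq> 0" "B = c * A" "hD = c ^ q * hN"
  shows "(a1 + hN * e) / B ^ q - A ^ q * (b1 + hD * e) / B ^ (2 * q) = a1 / B ^ q - A ^ q * b1 / B ^ (2 * q)"
proof -
  have k: "A ^ q * hD = B ^ q * hN" using assms by (simp add: power_mult_distrib)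
  have B2: "B ^ (2 * q) = B ^ q * B ^ q" by (simp add: mult_2 power_add)
  have "A ^ q * (b1 + hD * e) / B ^ (2 * q) = A ^ q * b1 / B ^ (2 * q) + (A ^ q * hD) * e / B ^ (2 * q)"
    by (simp add: algebra_simps add_divide_distrib)
  also have "(A ^ q * hD) * e / B ^ (2 * q) = hN * e / B ^ q"
    unfolding k B2 using assms(1) by (simp add: field_simps)
  finally show ?thesis by (simp add: add_divide_distrib)
qed

lemma HD_rel:
  fixes p M :: nat and l :: "'a::comm_ring_1"
  assumes "CHAR('a) = p" "prime p" "M \<ge> 2"
  shows "HD (2*p-1) M l = (- of_nat M) ^ p * HD (p-1) M l"
  unfolding HD_def
proof (rule sum_rel)
  show "(p - 1) div M \<le> (2 * p - 1) div M" by (rule div_le_mono) simp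
  fix i assume "i \<le> (2 * p - 1) div M"
  from coeff_rel[OF assms this] show "of_int (hd_coeff (2 * p - 1) M i) * l ^ (i * M) =
     (if i \<le> (p - 1) div M then (- of_nat M) ^ p * (of_int (hd_coeff (p - 1) M i) * l ^ (i * M)) else 0)"
    by simp
qed

lemma Hd_rel:
  fixes p M :: nat and l :: "'a::comm_ring_1"
  assumes "CHAR('a) = p" "prime p" "M \<ge> 2"
  shows "Hd (2*p-1) M l = ((- of_nat M) ^ p) ^ p * Hd (p-1) M l"
  unfolding Hd_def assms(1)
proof (rule sum_rel)
  show "(p - 1) div M \<le> (2 * p - 1) div M" by (rule div_le_mono) simp
  have p0: "p > 0" using assms(2) prime_gt_0_nat by blast
  fix i assume "i \<le> (2 * p - 1) div M"
  from coeff_rel[OF assms this] show "of_int (hd_coeff (2 * p - 1) M i) ^ p * of_nat (i * M) * l ^ ((i * M - 1) * p) =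
     (if i \<le> (p - 1) div M then ((- of_nat M) ^ p) ^ p * (of_int (hd_coeff (p - 1) M i) ^ p * of_nat (i * M) * l ^ ((i * M - 1) * p)) else 0)"
    using p0 by (simp add: power_mult_distrib zero_power)
qed

theorem corollary3p11:
  fixes lam :: "'a::field" and p N :: nat
  assumes "CHAR('a) = p" and "p > 2"
    and "\<forall>x::'a. \<exists>y. y ^ p = x"
    and "N \<ge> 2" and "\<not> p dvd (N + 1)"
    and "HD (p - 1) (N + 1) lam \<noteq> 0"
  shows "(\<forall>eta :: 'a w2. fst eta = lam \<longrightarrow> w2_unit (HD_W2 (2 * p - 1) (N + 1) eta))
       \<and> (\<forall>eta eta' :: 'a w2. fst eta = lam \<longrightarrow> fst eta' = lam \<longrightarrow>
            w2_div (HD_W2 (p - 1) (N + 1) eta) (HD_W2 (2 * p - 1) (N + 1) eta)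
          = w2_div (HD_W2 (p - 1) (N + 1) eta') (HD_W2 (2 * p - 1) (N + 1) eta'))"
proof -
  define M where "M = N + 1"
  define c :: 'a where "c = (- of_nat M) ^ p"
  have pr: "prime p" using assms(1,2) prime_CHAR_semidom[where 'a='a] by simp
  have M2: "M \<ge> 2" using assms(4) M_def by simp
  have "(of_nat M :: 'a) \<noteq> 0" using assms(1,5) M_def of_nat_eq_0_iff_char_dvd by metis
  hence c0: "c \<noteq> 0" by (simp add: c_def)
  have HDr: "HD (2*p-1) M lam = c * HD (p-1) M lam" unfolding c_def by (rule HD_rel[OF assms(1) pr M2])
  have Hdr: "Hd (2*p-1) M lam = c ^ p * Hd (p-1) M lam" unfolding c_def by (rule Hd_rel[OF assms(1) pr M2])
  have B0: "HD (2*p-1) M lam \<noteq> 0" using HDr c0 assms(6) M_def by simp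
  have R: "w2_div (HD_W2 (p - 1) M (lam, e)) (HD_W2 (2 * p - 1) M (lam, e))
     = w2_div (HD_W2 (p - 1) M (lam, 0)) (HD_W2 (2 * p - 1) M (lam, 0))" for e
  proof -
    define A where "A = HD (p-1) M lam"
    define B where "B = HD (2*p-1) M lam"
    define a1 where "a1 = snd (HD_W2 (p - 1) M (lam, 0))"
    define b1 where "b1 = snd (HD_W2 (2*p - 1) M (lam, 0))"
    define hN where "hN = Hd (p-1) M lam"
    define hD where "hD = Hd (2*p-1) M lam"
    have E: "HD_W2 (p - 1) M (lam, e) = (A, a1 + hN * e)" "HD_W2 (2*p - 1) M (lam, e) = (B, b1 + hD * e)"
      "HD_W2 (p - 1) M (lam, 0) = (A, a1)" "HD_W2 (2*p - 1) M (lam, 0) = (B, b1)"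
      unfolding A_def B_def a1_def b1_def hN_def hD_def by (subst HD_W2_eq, simp)+
    have "B \<noteq> 0" "B = c * A" "hD = c ^ p * hN"
      using B0 HDr Hdr by (simp_all add: A_def B_def hN_def hD_def)
    note I = indep[OF this, of a1 e b1]
    show ?thesis unfolding E using \<open>B \<noteq> 0\<close> I assms(1) by (simp add: w2_div_eq)
  qed
  show ?thesis
  proof (intro conjI allI impI)
    fix eta :: "'a w2" assume "fst eta = lam"
    hence "fst (HD_W2 (2 * p - 1) (N + 1) eta) = HD (2*p-1) M lam"
      using HD_W2_eq[of "2*p-1" "N+1" lam "snd eta"] M_def by (metis fst_conv prod.collapse)
    thus "w2_unit (HD_W2 (2 * p - 1) (N + 1) eta)" using B0 by (intro w2_unit_I) simp
  next
    fix eta eta' :: "'a w2" assume "fst eta = lam" "fst eta' = lam"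
    hence "eta = (lam, snd eta)" "eta' = (lam, snd eta')" by (metis prod.collapse)+
    thus "w2_div (HD_W2 (p - 1) (N + 1) eta) (HD_W2 (2 * p - 1) (N + 1) eta)
        = w2_div (HD_W2 (p - 1) (N + 1) eta') (HD_W2 (2 * p - 1) (N + 1) eta')"
      using R[of "snd eta"] R[of "snd eta'"] M_def by metis
  qed
qed

end
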